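(* Let $(B,\mathbb{T},\omega)$ be a $C^*$-dynamical system with $B\subset B(H)$ for a Hilbert space $H$, and let $A$ be a maximal (abelian $\mathbb{T}$-invariant $*$-subalgebra) of $B$. Then $\pi_n(A'\cap B)\subset A$ for all $n\in\mathbb{Z}$.
   Context: A $C^*$-dynamical system $(B,\mathbb{T},\omega)$: $B$ a $C^*$-algebra, $\omega:\mathbb{T}\to\mathrm{Aut}(B)$ a homomorphism with $t\mapsto\omega_t(b)$ norm-continuous for each $b$. A maximal (abelian $\mathbb{T}$-invariant $*$-subalgebra) is a $*$-subalgebra which is abelian, satisfies $\omega_t(A)\subset A$ for all $t$, and is maximal among such. $A'$ denotes the commutant of $A$ in $B(H)$. For $n\in\mathbb{Z}$, $\pi_n(b)=\int_{\mathbb{T}}t^{-n}\omega_t(b)\,dt$, with $dt$ normalised Haar measure. *)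

theory Defs
  imports "HOL-Analysis.Analysis"
begin

text \<open>Abstract (not necessarily unital) C*-algebras: a real Banach algebra carrying a
compatible complex scalar multiplication, an involution and the C*-identity.\<close>

class cstar_algebra = real_normed_algebra + banach +
  fixes cscale :: "complex \<Rightarrow> 'a \<Rightarrow> 'a"
    and cstar :: "'a \<Rightarrow> 'a"
  assumes cscale_add_left: "cscale (a + b) x = cscale a x + cscale b x"
    and cscale_add_right: "cscale a (x + y) = cscale a x + cscale a y"
    and cscale_cscale: "cscale a (cscale b x) = cscale (a * b) x"
    and cscale_of_real: "cscale (complex_of_real r) x = r *\<^sub>R x"
    and cscale_mult_left: "cscale a x * y = cscale a (x * y)"
    and cscale_mult_right: "x * cscale a y = cscale a (x * y)"
    and norm_cscale: "norm (cscale a x) = cmod a * norm x"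
    and cstar_cstar: "cstar (cstar x) = x"
    and cstar_add: "cstar (x + y) = cstar x + cstar y"
    and cstar_cscale: "cstar (cscale a x) = cscale (cnj a) (cstar x)"
    and cstar_mult: "cstar (x * y) = cstar y * cstar x"
    and cstar_identity: "norm (cstar x * x) = norm x ^ 2"

definition circle :: "complex set" where
  "circle = sphere 0 1"

definition star_subalgebra :: "'a::cstar_algebra set \<Rightarrow> bool" where
  "star_subalgebra S \<longleftrightarrow> 0 \<in> S \<and> (\<forall>x\<in>S. \<forall>y\<in>S. x + y \<in> S \<and> x * y \<in> S)
     \<and> (\<forall>c. \<forall>x\<in>S. cscale c x \<in> S) \<and> (\<forall>x\<in>S. cstar x \<in> S)"

definition cstar_subalgebra :: "'a::cstar_algebra set \<Rightarrow> bool" where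
  "cstar_subalgebra S \<longleftrightarrow> star_subalgebra S \<and> closed S"

definition star_automorphism :: "'a::cstar_algebra set \<Rightarrow> ('a \<Rightarrow> 'a) \<Rightarrow> bool" where
  "star_automorphism B f \<longleftrightarrow> bij_betw f B B
     \<and> (\<forall>x\<in>B. \<forall>y\<in>B. f (x + y) = f x + f y \<and> f (x * y) = f x * f y)
     \<and> (\<forall>c. \<forall>x\<in>B. f (cscale c x) = cscale c (f x))
     \<and> (\<forall>x\<in>B. f (cstar x) = cstar (f x))"

definition cstar_dynamical_system ::
    "'a::cstar_algebra set \<Rightarrow> (complex \<Rightarrow> 'a \<Rightarrow> 'a) \<Rightarrow> bool" where
  "cstar_dynamical_system B \<omega> \<longleftrightarrow> cstar_subalgebra B
     \<and> (\<forall>t\<in>circle. star_automorphism B (\<omega> t))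
     \<and> (\<forall>b\<in>B. \<omega> 1 b = b)
     \<and> (\<forall>s\<in>circle. \<forall>t\<in>circle. \<forall>b\<in>B. \<omega> (s * t) b = \<omega> s (\<omega> t b))
     \<and> (\<forall>b\<in>B. continuous_on circle (\<lambda>t. \<omega> t b))"

definition abelian_invariant_subalgebra ::
    "'a::cstar_algebra set \<Rightarrow> (complex \<Rightarrow> 'a \<Rightarrow> 'a) \<Rightarrow> 'a set \<Rightarrow> bool" where
  "abelian_invariant_subalgebra B \<omega> A \<longleftrightarrow> A \<subseteq> B \<and> star_subalgebra A
     \<and> (\<forall>x\<in>A. \<forall>y\<in>A. x * y = y * x) \<and> (\<forall>t\<in>circle. \<omega> t ` A \<subseteq> A)"

definition maximal_abelian_invariant_subalgebra ::
    "'a::cstar_algebra set \<Rightarrow> (complex \<Rightarrow> 'a \<Rightarrow> 'a) \<Rightarrow> 'a set \<Rightarrow> bool" where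
  "maximal_abelian_invariant_subalgebra B \<omega> A \<longleftrightarrow> abelian_invariant_subalgebra B \<omega> A
     \<and> (\<forall>C. abelian_invariant_subalgebra B \<omega> C \<and> A \<subseteq> C \<longrightarrow> C = A)"

definition commutant_in :: "'a::cstar_algebra set \<Rightarrow> 'a set \<Rightarrow> 'a set" where
  "commutant_in B A = {b \<in> B. \<forall>a\<in>A. a * b = b * a}"

text \<open>\<open>\<pi>\<^sub>n(b) = \<integral>\<^sub>\<bbbT> t\<^sup>-\<^sup>n \<omega>\<^sub>t(b) dt\<close>, normalised Haar measure realised via
  \<open>t = e\<^sup>2\<^sup>\<pi>\<^sup>i\<^sup>\<theta>\<close>, \<open>\<theta> \<in> [0,1]\<close>.\<close>
definition spectral_proj :: "(complex \<Rightarrow> 'a::cstar_algebra \<Rightarrow> 'a) \<Rightarrow> int \<Rightarrow> 'a \<Rightarrow> 'a" where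
  "spectral_proj \<omega> n b =
     integral {0..1} (\<lambda>\<theta>::real. cscale (cis (2 * pi * \<theta>) powi (- n)) (\<omega> (cis (2 * pi * \<theta>)) b))"

end

theory Submission
  imports Defs
begin


lemma cscale_zero_left[simp]: "cscale 0 (x::'a::cstar_algebra) = 0"
proof -
  have "cscale (0+0) x = cscale 0 x + cscale 0 x" by (rule cscale_add_left)
  then show ?thesis by simp
qed

lemma cscale_zero_right[simp]: "cscale a (0::'a::cstar_algebra) = 0"
proof -
  have "cscale a (0+0) = cscale a 0 + cscale a 0" by (rule cscale_add_right)
  then show ?thesis by simp
qed

lemma cscale_minus_left: "cscale (- a) (x::'a::cstar_algebra) = - cscale a x"
proof -
  have "cscale (a + - a) x = cscale a x + cscale (-a) x" by (rule cscale_add_left)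
  then show ?thesis by (simp add: eq_neg_iff_add_eq_0 add.commute)
qed

lemma cscale_minus_right: "cscale a (- x::'a::cstar_algebra) = - cscale a x"
proof -
  have "cscale a (x + - x) = cscale a x + cscale a (-x)" by (rule cscale_add_right)
  then show ?thesis by (simp add: eq_neg_iff_add_eq_0 add.commute)
qed

lemma cscale_diff_right: "cscale a (x - y::'a::cstar_algebra) = cscale a x - cscale a y"
  using cscale_add_right[of a x "-y"] cscale_minus_right[of a y] by simp

lemma cscale_diff_left: "cscale (a - b) (x::'a::cstar_algebra) = cscale a x - cscale b x"
  using cscale_add_left[of a "-b" x] cscale_minus_left[of b x] by simp

lemma cscale_one[simp]: "cscale 1 (x::'a::cstar_algebra) = x"
  using cscale_of_real[of 1 x] by simp

lemma cscale_scaleR_right: "cscale a (r *\<^sub>R (x::'a::cstar_algebra)) = r *\<^sub>R cscale a x"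
proof -
  have "cscale a (r *\<^sub>R x) = cscale a (cscale (complex_of_real r) x)" by (simp add: cscale_of_real)
  also have "\<dots> = cscale (complex_of_real r) (cscale a x)" by (simp add: cscale_cscale mult.commute)
  finally show ?thesis by (simp add: cscale_of_real)
qed

lemma cscale_scaleR_left: "cscale (r *\<^sub>R a) (x::'a::cstar_algebra) = r *\<^sub>R cscale a x"
proof -
  have "cscale (r *\<^sub>R a) x = cscale (complex_of_real r) (cscale a x)"
    by (simp add: cscale_cscale scaleR_conv_of_real)
  then show ?thesis by (simp add: cscale_of_real)
qed

lemma bounded_bilinear_cscale: "bounded_bilinear (cscale :: complex \<Rightarrow> 'a::cstar_algebra \<Rightarrow> 'a)"
  apply (rule bounded_bilinear.intro)
  apply (simp_all add: cscale_add_left cscale_add_right cscale_scaleR_left cscale_scaleR_right)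
  apply (rule exI[of _ 1]) by (simp add: norm_cscale)

lemma bounded_linear_cscale: "bounded_linear (cscale a :: 'a::cstar_algebra \<Rightarrow> 'a)"
  by (rule bounded_bilinear.bounded_linear_right[OF bounded_bilinear_cscale])

lemma cstar_zero[simp]: "cstar (0::'a::cstar_algebra) = 0"
proof -
  have "cstar (0+0) = cstar 0 + cstar 0" by (rule cstar_add)
  then show ?thesis by simp
qed

lemma cstar_minus: "cstar (- x::'a::cstar_algebra) = - cstar x"
proof -
  have "cstar (x + - x) = cstar x + cstar (-x)" by (rule cstar_add)
  then show ?thesis by (simp add: eq_neg_iff_add_eq_0 add.commute)
qed

lemma cstar_diff: "cstar (x - y::'a::cstar_algebra) = cstar x - cstar y"
  using cstar_add[of x "-y"] cstar_minus[of y] by simp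

lemma norm_cstar_le: "norm (x::'a::cstar_algebra) \<le> norm (cstar x)"
proof (cases "x = 0")
  case True then show ?thesis by simp
next
  case False
  have "norm x ^ 2 = norm (cstar x * x)" by (simp add: cstar_identity)
  also have "\<dots> \<le> norm (cstar x) * norm x" by (rule norm_mult_ineq)
  finally have "norm x * norm x \<le> norm (cstar x) * norm x" by (simp add: power2_eq_square)
  then show ?thesis using False by simp
qed

lemma norm_cstar[simp]: "norm (cstar (x::'a::cstar_algebra)) = norm x"
  using norm_cstar_le[of x] norm_cstar_le[of "cstar x"] by (simp add: cstar_cstar)


definition qinv :: "'a::cstar_algebra \<Rightarrow> 'a \<Rightarrow> bool" where
  "qinv a g \<longleftrightarrow> a + g = a * g \<and> a + g = g * a"

lemma qinv_unique:
  fixes a g h :: "'a::cstar_algebra"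
  assumes "qinv a g" "qinv a h" shows "g = h"
proof -
  have ha: "h*a = a+h" and ag: "a*g = a+g" using assms unfolding qinv_def by auto
  have "(h*a)*g = h*(a*g)" by (simp add: mult.assoc)
  then have "(a+h)*g = h*(a+g)" by (simp only: ha ag)
  then have "a*g + h*g = h*a + h*g" by (simp add: distrib_left distrib_right)
  then have "a + g + h*g = a + h + h*g" by (simp only: ha ag)
  then show ?thesis by simp
qed

fun sqi :: "nat \<Rightarrow> 'a::cstar_algebra \<Rightarrow> 'a" where
  "sqi 0 x = x"
| "sqi (Suc j) x = sqi j x * sqi j x"

lemma sqi_cscale: "sqi j (cscale c (x::'a::cstar_algebra)) = cscale (c ^ (2^j)) (sqi j x)"
proof (induction j)
  case 0 then show ?case by simp
next
  case (Suc j)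
  have e: "c ^ (2 * 2 ^ j) = c^(2^j) * c^(2^j)"
    by (simp add: power_add mult_2)
  show ?case
    by (simp add: Suc e cscale_mult_left cscale_mult_right cscale_cscale)
qed

lemma sqi_selfadj:
  fixes x :: "'a::cstar_algebra"
  assumes "cstar x = x"
  shows "cstar (sqi j x) = sqi j x \<and> norm (sqi j x) = norm x ^ (2^j)"
proof (induction j)
  case 0 then show ?case using assms by simp
next
  case (Suc j)
  then have a: "cstar (sqi j x) = sqi j x" and b: "norm (sqi j x) = norm x ^ (2^j)" by auto
  have "norm (sqi (Suc j) x) = norm (cstar (sqi j x) * sqi j x)" using a by simp
  also have "\<dots> = (norm x ^ (2^j))^2" using b by (simp add: cstar_identity)
  also have "\<dots> = norm x ^ (2 ^ Suc j)" by (simp add: power_mult[symmetric] mult.commute)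
  finally show ?case using a by (simp add: cstar_mult)
qed

lemma qinv_norm_small:
  fixes a g :: "'a::cstar_algebra"
  assumes "qinv a g" "norm a \<le> 1/9" shows "norm g \<le> 1/8"
proof -
  have "g = a*g - a" using assms(1) unfolding qinv_def by (simp add: algebra_simps)
  then have "norm g \<le> norm (a*g) + norm a" by (metis norm_triangle_ineq4)
  also have "\<dots> \<le> norm a * norm g + norm a" by (simp add: norm_mult_ineq)
  also have "\<dots> \<le> (1/9) * norm g + 1/9"
    using assms(2) by (intro add_mono mult_right_mono) auto
  finally show ?thesis by simp
qed

lemma qinv_norm_big:
  fixes a g :: "'a::cstar_algebra"
  assumes "qinv a g" "norm a = 1" shows "norm g \<ge> 1/2"
proof -
  have "a = a*g - g" using assms(1) unfolding qinv_def by (simp add: algebra_simps)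
  then have "norm a \<le> norm (a*g) + norm g" by (metis norm_triangle_ineq4)
  also have "\<dots> \<le> norm a * norm g + norm g" by (simp add: norm_mult_ineq)
  finally show ?thesis using assms(2) by simp
qed

lemma qinv_square:
  fixes y g1 g2 :: "'a::cstar_algebra"
  assumes "qinv y g1" "qinv (-y) g2"
  shows "qinv (y*y) ((1/2) *\<^sub>R (g1+g2))"
proof -
  have 1: "y*g1 = y + g1" "g1*y = y + g1" using assms(1) unfolding qinv_def by auto
  have 2: "y*g2 = y - g2" "g2*y = y - g2" using assms(2) unfolding qinv_def
    by (auto simp: algebra_simps)
  have a: "y*y*g1 = y*y + y + g1" by (simp add: mult.assoc 1 distrib_left)
  have b: "y*y*g2 = y*y - y + g2" by (simp add: mult.assoc 2 right_diff_distrib)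
  have c: "g1*(y*y) = y*y + y + g1" by (simp add: mult.assoc[symmetric] 1 distrib_right)
  have d: "g2*(y*y) = y*y - y + g2" by (simp add: mult.assoc[symmetric] 2 left_diff_distrib)
  have "(y*y) * ((1/2) *\<^sub>R (g1+g2)) = (1/2) *\<^sub>R (y*y*g1 + y*y*g2)"
    by (simp add: distrib_left)
  also have "\<dots> = y*y + (1/2) *\<^sub>R (g1+g2)" unfolding a b
    by (simp add: algebra_simps scaleR_2[symmetric] del: scaleR_2)
  finally have e1: "y*y + (1/2) *\<^sub>R (g1+g2) = (y*y) * ((1/2) *\<^sub>R (g1+g2))" by simp
  have "((1/2) *\<^sub>R (g1+g2)) * (y*y) = (1/2) *\<^sub>R (g1*(y*y) + g2*(y*y))"
    by (simp add: distrib_right)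
  also have "\<dots> = y*y + (1/2) *\<^sub>R (g1+g2)" unfolding c d
    by (simp add: algebra_simps scaleR_2[symmetric] del: scaleR_2)
  finally show ?thesis using e1 unfolding qinv_def by metis
qed

lemma qinv_resolvent:
  fixes a b g h :: "'a::cstar_algebra"
  assumes "qinv a g" "qinv b h"
  shows "h - g = (a-b) - g*(a-b) - (a-b)*h + g*(a-b)*h"
proof -
  have ga: "g*a = a + g" using assms(1) unfolding qinv_def by metis
  have bh: "b*h = b + h" using assms(2) unfolding qinv_def by metis
  have "g*(a-b)*h = (g*a)*h - g*(b*h)" by (simp add: left_diff_distrib right_diff_distrib mult.assoc)
  also have "\<dots> = (a+g)*h - g*(b+h)" by (simp only: ga bh)
  also have "\<dots> = a*h - g*b" by (simp add: algebra_simps)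
  finally have 1: "g*(a-b)*h = a*h - g*b" .
  have "(a-b) - g*(a-b) - (a-b)*h + (a*h - g*b) = a - b - g*a + b*h" by (simp add: algebra_simps)
  also have "\<dots> = a - b - (a+g) + (b+h)" by (simp only: ga bh)
  also have "\<dots> = h - g" by simp
  finally show ?thesis using 1 by simp
qed


lemma qinv_resolvent_norm:
  fixes a b g h :: "'a::cstar_algebra"
  assumes "qinv a g" "qinv b h"
  shows "norm (h - g) \<le> norm (a-b) * (1 + norm g) * (1 + norm h)"
proof -
  define d where "d = a - b"
  have "norm (h - g) = norm (d - g*d - d*h + g*d*h)"
    using qinv_resolvent[OF assms] by (simp add: d_def)
  also have "\<dots> \<le> norm (d - g*d - d*h) + norm (g*d*h)" by (rule norm_triangle_ineq)
  also have "norm (d - g*d - d*h) \<le> norm (d - g*d) + norm (d*h)" by (rule norm_triangle_ineq4)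
  also have "norm (d - g*d) \<le> norm d + norm (g*d)" by (rule norm_triangle_ineq4)
  also have "norm (g*d) \<le> norm g * norm d" by (rule norm_mult_ineq)
  also have "norm (d*h) \<le> norm d * norm h" by (rule norm_mult_ineq)
  also have "norm (g*d*h) \<le> norm g * norm d * norm h"
    by (metis norm_mult_ineq mult_right_mono norm_ge_zero order_trans)
  finally have "norm (h - g) \<le> norm d + norm g * norm d + norm d * norm h + norm g * norm d * norm h"
    by simp
  also have "\<dots> = norm d * (1 + norm g) * (1 + norm h)" by (simp add: algebra_simps)
  finally show ?thesis by (simp add: d_def)
qed

lemma qinv_cont:
  fixes k :: "'a::cstar_algebra"
  assumes ex: "\<forall>\<mu>\<in>S. \<exists>g. qinv (cscale \<mu> k) g"
  shows "continuous_on S (\<lambda>\<mu>. SOME g. qinv (cscale \<mu> k) g)"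
proof (cases "k = 0")
  case True
  then show ?thesis by (simp add: continuous_on_const)
next
  case False
  define G where "G = (\<lambda>\<mu>. SOME g. qinv (cscale \<mu> k) g)"
  have Gq: "\<And>\<mu>. \<mu> \<in> S \<Longrightarrow> qinv (cscale \<mu> k) (G \<mu>)"
    unfolding G_def using ex by (metis someI_ex)
  define M where "M = norm k"
  have M: "M > 0" using False by (simp add: M_def)
  show ?thesis
    unfolding continuous_on_iff G_def[symmetric]
  proof (intro ballI allI impI)
    fix \<mu>0 e assume \<mu>0: "\<mu>0 \<in> S" and e: "(0::real) < e"
    define g0 where "g0 = G \<mu>0"
    define K where "K = 1 + norm g0"
    have K: "K \<ge> 1" by (simp add: K_def)
    define d where "d = min (1/(2*M*K)) (e/(2*M*K*K))"
    have d: "d > 0" using M K e by (simp add: d_def)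
    show "\<exists>d>0. \<forall>\<mu>\<in>S. dist \<mu> \<mu>0 < d \<longrightarrow> dist (G \<mu>) (G \<mu>0) < e"
    proof (intro exI[of _ d] conjI d ballI impI)
      fix \<mu> assume \<mu>: "\<mu> \<in> S" and dist: "dist \<mu> \<mu>0 < d"
      define h where "h = G \<mu>"
      define c where "c = cmod (\<mu> - \<mu>0) * M"
      have c0: "c \<ge> 0" by (simp add: c_def M_def)
      have nab: "norm (cscale \<mu>0 k - cscale \<mu> k) = c"
        by (simp add: cscale_diff_left[symmetric] norm_cscale c_def M_def norm_minus_commute)
      have r: "norm (h - g0) \<le> c * K * (1 + norm h)"
        using qinv_resolvent_norm[OF Gq[OF \<mu>0] Gq[OF \<mu>]] nab
        by (simp add: h_def g0_def K_def)
      have d1: "cmod (\<mu> - \<mu>0) < 1/(2*M*K)" and d2: "cmod (\<mu> - \<mu>0) < e/(2*M*K*K)"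
        using dist by (auto simp: d_def dist_norm)
      have cK: "c * K \<le> 1/2"
      proof -
        have "cmod (\<mu> - \<mu>0) * (2*M*K) < 1" using d1 M K by (simp add: field_simps)
        then show ?thesis by (simp add: c_def field_simps)
      qed
      have cKK: "c * (2*K*K) < e"
      proof -
        have "cmod (\<mu> - \<mu>0) * (2*M*K*K) < e" using d2 M K by (simp add: field_simps)
        then show ?thesis by (simp add: c_def field_simps)
      qed
      have "(2 * (c * K)) * (1 + norm h) \<le> 1 * (1 + norm h)"
        using cK by (intro mult_right_mono) auto
      then have "2 * (c * K * (1 + norm h)) \<le> 1 + norm h" by (simp add: mult.assoc)
      with r have r2: "2 * norm (h - g0) \<le> 1 + norm h" by linarith
      have "norm h \<le> norm g0 + norm (h - g0)" by (metis norm_triangle_sub add.commute)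
      with r2 have "norm h \<le> 2 * norm g0 + 1" by linarith
      then have hK: "1 + norm h \<le> 2*K" by (simp add: K_def)
      have "c * K * (1 + norm h) \<le> c * K * (2*K)"
        using hK c0 K by (intro mult_left_mono) auto
      with r cKK have "norm (h - g0) < e" by (simp add: algebra_simps)
      then show "dist (G \<mu>) (G \<mu>0) < e" by (simp add: dist_norm h_def g0_def)
    qed
  qed
qed


lemma spectral_contra:
  fixes k :: "'a::cstar_algebra"
  assumes sa: "cstar k = k" and Mpos: "norm k > 0" and R: "R * norm k > 1"
    and ex: "\<forall>\<mu>. cmod \<mu> \<le> R \<longrightarrow> (\<exists>g. qinv (cscale \<mu> k) g)"
  shows False
proof -
  define M where "M = norm k"
  define G where "G = (\<lambda>\<mu>. SOME g. qinv (cscale \<mu> k) g)"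
  have ex': "\<forall>\<mu>\<in>cball 0 R. \<exists>g. qinv (cscale \<mu> k) g" using ex by auto
  have Gq: "\<And>\<mu>. cmod \<mu> \<le> R \<Longrightarrow> qinv (cscale \<mu> k) (G \<mu>)"
    unfolding G_def using ex by (metis someI_ex)
  have "uniformly_continuous_on (cball 0 R) G"
    unfolding G_def by (rule compact_uniformly_continuous[OF qinv_cont[OF ex'] compact_cball])
  then obtain \<delta> where \<delta>: "\<delta> > 0"
    and uc: "\<And>x x'. x \<in> cball 0 R \<Longrightarrow> x' \<in> cball 0 R \<Longrightarrow> dist x' x < \<delta> \<Longrightarrow> dist (G x') (G x) < 1/8"
    unfolding uniformly_continuous_on_def by (metis zero_less_divide_1_iff zero_less_numeral)
  have ind: "\<forall>\<mu> \<mu>'. cmod \<mu> \<le> R \<longrightarrow> cmod \<mu>' \<le> R \<longrightarrow> cmod (\<mu> - \<mu>') < \<delta> \<longrightarrow>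
     (\<exists>g g'. qinv (sqi j (cscale \<mu> k)) g \<and> qinv (sqi j (cscale \<mu>' k)) g' \<and> norm (g - g') < 1/8)" for j
  proof (induction j)
    case 0
    show ?case
    proof (intro allI impI)
      fix \<mu> \<mu>' :: complex assume a: "cmod \<mu> \<le> R" "cmod \<mu>' \<le> R" "cmod (\<mu> - \<mu>') < \<delta>"
      have "dist (G \<mu>) (G \<mu>') < 1/8" using uc[of \<mu>' \<mu>] a by (simp add: dist_norm)
      then show "\<exists>g g'. qinv (sqi 0 (cscale \<mu> k)) g \<and> qinv (sqi 0 (cscale \<mu>' k)) g' \<and> norm (g - g') < 1/8"
        using Gq[OF a(1)] Gq[OF a(2)] by (auto simp: dist_norm)
    qed
  next
    case (Suc j)
    define \<zeta> where "\<zeta> = cis (pi / 2^j)"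
    have z1: "cmod \<zeta> = 1" by (simp add: \<zeta>_def)
    have z2: "\<zeta> ^ (2^j) = -1"
    proof -
      have "cis (pi / 2^j) ^ (2^j) = cis (real (2^j) * (pi / 2^j))" by (rule Complex.DeMoivre)
      then show ?thesis by (simp add: \<zeta>_def)
    qed
    have neg: "sqi j (cscale (\<zeta> * \<nu>) k) = - sqi j (cscale \<nu> k)" for \<nu>
      by (simp add: sqi_cscale power_mult_distrib z2 cscale_minus_left)
    show ?case
    proof (intro allI impI)
      fix \<mu> \<mu>' :: complex assume a: "cmod \<mu> \<le> R" "cmod \<mu>' \<le> R" "cmod (\<mu> - \<mu>') < \<delta>"
      obtain g1 g1' where 1: "qinv (sqi j (cscale \<mu> k)) g1" "qinv (sqi j (cscale \<mu>' k)) g1'"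
        "norm (g1 - g1') < 1/8" using Suc a by blast
      have b: "cmod (\<zeta>*\<mu>) \<le> R" "cmod (\<zeta>*\<mu>') \<le> R" "cmod (\<zeta>*\<mu> - \<zeta>*\<mu>') < \<delta>"
        using a z1 by (auto simp: norm_mult right_diff_distrib[symmetric])
      obtain g2 g2' where 2: "qinv (sqi j (cscale (\<zeta>*\<mu>) k)) g2" "qinv (sqi j (cscale (\<zeta>*\<mu>') k)) g2'"
        "norm (g2 - g2') < 1/8" using Suc b by blast
      have q1: "qinv (sqi (Suc j) (cscale \<mu> k)) ((1/2) *\<^sub>R (g1+g2))"
        using qinv_square[OF 1(1)] 2(1) neg by simp
      have q2: "qinv (sqi (Suc j) (cscale \<mu>' k)) ((1/2) *\<^sub>R (g1'+g2'))"
        using qinv_square[OF 1(2)] 2(2) neg by simp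
      have "(1/2) *\<^sub>R (g1+g2) - (1/2) *\<^sub>R (g1'+g2') = (1/2) *\<^sub>R ((g1 - g1') + (g2 - g2'))"
        by (simp add: algebra_simps)
      then have "norm ((1/2) *\<^sub>R (g1+g2) - (1/2) *\<^sub>R (g1'+g2')) \<le> (1/2) * (norm (g1 - g1') + norm (g2 - g2'))"
        by (simp add: norm_triangle_ineq)
      also have "\<dots> < 1/8" using 1(3) 2(3) by simp
      finally show "\<exists>g g'. qinv (sqi (Suc j) (cscale \<mu> k)) g \<and> qinv (sqi (Suc j) (cscale \<mu>' k)) g' \<and> norm (g - g') < 1/8"
        using q1 q2 by blast
    qed
  qed
  define r0 where "r0 = 1 / M"
  define r where "r = max 0 (r0 - \<delta>/2)"
  have M: "M > 0" using Mpos by (simp add: M_def)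
  have r0R: "r0 \<le> R" using R M by (simp add: r0_def M_def field_simps)
  have r0: "r0 > 0" using M by (simp add: r0_def)
  have r: "0 \<le> r" "r < r0" "r0 - r < \<delta>" using r0 \<delta> by (auto simp: r_def)
  have rM: "r * M < 1" "0 \<le> r * M" using r M by (auto simp: r0_def field_simps)
  obtain n where n: "(r * M) ^ n < 1/9" using real_arch_pow_inv[OF _ rM(1), of "1/9"] by auto
  have "n \<le> 2^n" using less_exp[of n] by simp
  then have "(r * M) ^ (2^n) \<le> (r * M) ^ n" using rM by (intro power_decreasing) auto
  with n have small: "(r * M) ^ (2^n) \<le> 1/9" by simp
  obtain g g' where gg: "qinv (sqi n (cscale (complex_of_real r0) k)) g"
      "qinv (sqi n (cscale (complex_of_real r) k)) g'" "norm (g - g') < 1/8"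
  proof -
    have c1: "cmod (complex_of_real r0) \<le> R" "cmod (complex_of_real r) \<le> R"
      "cmod (complex_of_real r0 - complex_of_real r) < \<delta>"
      using r0R r r0 by (auto simp: abs_of_nonneg norm_of_real[of "r0 - r", simplified])
    show ?thesis using ind[of n, rule_format, OF c1] that by blast
  qed
  have nrm: "norm (sqi n (cscale (complex_of_real t) k)) = (\<bar>t\<bar> * M) ^ (2^n)" for t
    by (simp add: sqi_cscale norm_cscale norm_power sqi_selfadj[OF sa] M_def power_mult_distrib)
  have "norm (sqi n (cscale (complex_of_real r) k)) \<le> 1/9" using nrm[of r] small r by simp
  then have ng': "norm g' \<le> 1/8" using qinv_norm_small gg(2) by blast
  have "norm (sqi n (cscale (complex_of_real r0) k)) = 1" using nrm[of r0] r0 M by (simp add: r0_def)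
  then have ng: "norm g \<ge> 1/2" using qinv_norm_big gg(1) by blast
  have "norm g \<le> norm g' + norm (g - g')" by (metis norm_triangle_sub add.commute)
  then show False using ng ng' gg(3) by linarith
qed


lemma ss_zero: "star_subalgebra B \<Longrightarrow> 0 \<in> B"
  and ss_add: "star_subalgebra B \<Longrightarrow> x \<in> B \<Longrightarrow> y \<in> B \<Longrightarrow> x + y \<in> B"
  and ss_mult: "star_subalgebra B \<Longrightarrow> x \<in> B \<Longrightarrow> y \<in> B \<Longrightarrow> x * y \<in> B"
  and ss_cscale: "star_subalgebra B \<Longrightarrow> x \<in> B \<Longrightarrow> cscale c x \<in> B"
  and ss_cstar: "star_subalgebra B \<Longrightarrow> x \<in> B \<Longrightarrow> cstar x \<in> B"
  unfolding star_subalgebra_def by auto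

lemma ss_minus: "star_subalgebra B \<Longrightarrow> x \<in> B \<Longrightarrow> - x \<in> B"
  using ss_cscale[of B x "-1"] by (simp add: cscale_minus_left)

lemma ss_diff: "star_subalgebra B \<Longrightarrow> x \<in> B \<Longrightarrow> y \<in> B \<Longrightarrow> x - y \<in> B"
  using ss_add[of B x "-y"] ss_minus[of B y] by simp

lemma ss_scaleR: "star_subalgebra B \<Longrightarrow> x \<in> B \<Longrightarrow> r *\<^sub>R x \<in> B"
  using ss_cscale[of B x "complex_of_real r"] by (simp add: cscale_of_real)

lemma ss_sum: "star_subalgebra B \<Longrightarrow> (\<And>i. i \<in> I \<Longrightarrow> f i \<in> B) \<Longrightarrow> sum f I \<in> B"
  by (induction I rule: infinite_finite_induct) (auto intro: ss_zero ss_add)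

lemma neumann:
  fixes a :: "'a::cstar_algebra"
  assumes B: "star_subalgebra B" "closed B" and a: "a \<in> B" "norm a < 1"
  shows "\<exists>g\<in>B. qinv a g"
proof -
  have cB: "complete B" using B(2) by (simp add: complete_eq_closed)
  have ne: "B \<noteq> {}" using ss_zero[OF B(1)] by auto
  have "\<exists>!g\<in>B. a*g - a = g"
  proof (rule Banach_fix[OF cB ne, of "norm a"])
    show "0 \<le> norm a" "norm a < 1" using a by auto
    show "(\<lambda>g. a*g - a) ` B \<subseteq> B" using B a by (auto intro: ss_diff ss_mult)
    fix x y assume "x \<in> B" "y \<in> B"
    have "dist (a*x - a) (a*y - a) = norm (a*(x - y))" by (simp add: dist_norm algebra_simps)
    also have "\<dots> \<le> norm a * dist x y" by (simp add: dist_norm norm_mult_ineq)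
    finally show "dist (a*x - a) (a*y - a) \<le> norm a * dist x y" .
  qed
  then obtain g where g: "g \<in> B" "a*g - a = g" by blast
  have "\<exists>!g\<in>B. g*a - a = g"
  proof (rule Banach_fix[OF cB ne, of "norm a"])
    show "0 \<le> norm a" "norm a < 1" using a by auto
    show "(\<lambda>g. g*a - a) ` B \<subseteq> B" using B a by (auto intro: ss_diff ss_mult)
    fix x y assume "x \<in> B" "y \<in> B"
    have "dist (x*a - a) (y*a - a) = norm ((x - y)*a)" by (simp add: dist_norm algebra_simps)
    also have "\<dots> \<le> norm a * dist x y" using norm_mult_ineq[of "x-y" a] by (simp add: dist_norm mult.commute)
    finally show "dist (x*a - a) (y*a - a) \<le> norm a * dist x y" .
  qed
  then obtain h where h: "h*a - a = h" by blast
  have ag: "a*g = a + g" using g(2) by (simp add: algebra_simps)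
  have ha: "h*a = a + h" using h by (simp add: algebra_simps)
  have "(h*a)*g = h*(a*g)" by (simp add: mult.assoc)
  then have "(a+h)*g = h*(a+g)" by (simp only: ha ag)
  then have "a*g + h*g = h*a + h*g" by (simp add: distrib_left distrib_right)
  then have "a + g + h*g = a + h + h*g" by (simp only: ha ag)
  then have "g = h" by simp
  then have "qinv a g" using ag ha unfolding qinv_def by simp
  with g show ?thesis by blast
qed

lemma star_hom_contractive:
  fixes B :: "'a::cstar_algebra set"
  assumes B: "star_subalgebra B" "closed B"
    and hom: "\<forall>x\<in>B. \<forall>y\<in>B. \<phi> (x + y) = \<phi> x + \<phi> y \<and> \<phi> (x * y) = \<phi> x * \<phi> y"
    and hsc: "\<forall>c. \<forall>x\<in>B. \<phi> (cscale c x) = cscale c (\<phi> x)"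
    and hst: "\<forall>x\<in>B. \<phi> (cstar x) = cstar (\<phi> x)"
    and x: "x \<in> B"
  shows "norm (\<phi> x) \<le> norm x"
proof -
  define h where "h = cstar x * x"
  have hB: "h \<in> B" using B x by (simp add: h_def ss_mult ss_cstar)
  define k where "k = \<phi> h"
  have k: "k = cstar (\<phi> x) * \<phi> x" using hom hst x B by (simp add: k_def h_def ss_cstar)
  have nk: "norm k = norm (\<phi> x) ^ 2" by (simp add: k cstar_identity)
  have nh: "norm h = norm x ^ 2" by (simp add: h_def cstar_identity)
  have sa: "cstar k = k" by (simp add: k cstar_mult cstar_cstar)
  have "norm k \<le> norm h"
  proof (rule ccontr)
    assume "\<not> norm k \<le> norm h"
    then have lt: "norm h < norm k" by simp
    define R where "R = 2 / (norm h + norm k)"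
    have pos: "norm h + norm k > 0" using lt by (metis add_nonneg_pos norm_ge_zero le_less_trans)
    have R1: "R * norm k > 1" using lt pos by (simp add: R_def field_simps)
    have R2: "R * norm h < 1" using lt pos by (simp add: R_def field_simps)
    have R0: "R \<ge> 0" using pos by (simp add: R_def)
    show False
    proof (rule spectral_contra[OF sa _ R1])
      show "norm k > 0" using lt by (metis norm_ge_zero le_less_trans)
      show "\<forall>\<mu>. cmod \<mu> \<le> R \<longrightarrow> (\<exists>g. qinv (cscale \<mu> k) g)"
      proof (intro allI impI)
        fix \<mu> :: complex assume \<mu>: "cmod \<mu> \<le> R"
        have aB: "cscale \<mu> h \<in> B" using B hB by (simp add: ss_cscale)
        have "norm (cscale \<mu> h) = cmod \<mu> * norm h" by (simp add: norm_cscale)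
        also have "\<dots> \<le> R * norm h" using \<mu> by (intro mult_right_mono) auto
        finally have "norm (cscale \<mu> h) < 1" using R2 by simp
        then obtain g where g: "g \<in> B" "qinv (cscale \<mu> h) g" using neumann[OF B aB] by blast
        have "qinv (\<phi> (cscale \<mu> h)) (\<phi> g)"
          using g aB hom unfolding qinv_def by metis
        then show "\<exists>g. qinv (cscale \<mu> k) g" using hsc hB by (auto simp: k_def)
      qed
    qed
  qed
  then have "norm (\<phi> x) ^ 2 \<le> norm x ^ 2" using nk nh by simp
  then show ?thesis by (rule power2_le_imp_le) simp
qed


lemma integral_in_sub:
  fixes f :: "real \<Rightarrow> 'a::cstar_algebra"
  assumes B: "star_subalgebra B" "closed B" and f: "f integrable_on {a..b}"
    and fB: "\<forall>x\<in>{a..b}. f x \<in> B"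
  shows "integral {a..b} f \<in> B"
proof -
  have hi: "(f has_integral integral {a..b} f) {a..b}" using f by (simp add: integrable_integral)
  have "integral {a..b} f \<in> closure B"
    unfolding closure_approachable
  proof (intro allI impI)
    fix e :: real assume e: "e > 0"
    obtain \<gamma> where g: "gauge \<gamma>" and gp: "\<And>\<D>. \<D> tagged_division_of {a..b} \<and> \<gamma> fine \<D> \<Longrightarrow>
        norm (sum (\<lambda>(x,k). Henstock_Kurzweil_Integration.content k *\<^sub>R f x) \<D> - integral {a..b} f) < e"
      using hi e unfolding has_integral_real by meson
    obtain p where p: "p tagged_division_of (cbox a b)" "\<gamma> fine p"
      using fine_division_exists[OF g] by blast
    have p': "p tagged_division_of {a..b}" using p(1) by (simp add: box_real)
    have "sum (\<lambda>(x,k). Henstock_Kurzweil_Integration.content k *\<^sub>R f x) p \<in> B"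
    proof (rule ss_sum[OF B(1)])
      fix i assume i: "i \<in> p"
      obtain x K where xK: "i = (x,K)" by (cases i)
      have "x \<in> {a..b}" using p' i xK by blast
      then show "(case i of (x, k) \<Rightarrow> Henstock_Kurzweil_Integration.content k *\<^sub>R f x) \<in> B"
        using xK fB B by (auto intro: ss_scaleR)
    qed
    then show "\<exists>y\<in>B. dist y (integral {a..b} f) < e"
      using gp[of p] p' p(2) by (auto simp: dist_norm)
  qed
  then show ?thesis using B(2) by simp
qed

lemma hom_sum:
  assumes add: "\<forall>x\<in>B. \<forall>y\<in>B. L (x + y) = L x + L y" and B: "star_subalgebra B"
    and L0: "L 0 = 0"
  shows "(\<And>i. i \<in> I \<Longrightarrow> g i \<in> B) \<Longrightarrow> L (sum g I) = sum (\<lambda>i. L (g i)) I"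
proof (induction I rule: infinite_finite_induct)
  case (insert x F)
  then show ?case using add ss_sum[OF B, of F g] by simp
qed (auto simp: L0)

lemma integral_hom:
  fixes f :: "real \<Rightarrow> 'a::cstar_algebra"
  assumes B: "star_subalgebra B" "closed B" and f: "f integrable_on {a..b}"
    and Lf: "(\<lambda>x. L (f x)) integrable_on {a..b}"
    and fB: "\<forall>x\<in>{a..b}. f x \<in> B"
    and add: "\<forall>x\<in>B. \<forall>y\<in>B. L (x + y) = L x + L y"
    and sc: "\<forall>r. \<forall>x\<in>B. L (r *\<^sub>R x) = r *\<^sub>R L x"
    and lip: "\<forall>x\<in>B. norm (L x) \<le> norm x"
  shows "L (integral {a..b} f) = integral {a..b} (\<lambda>x. L (f x))"
proof -
  define I where "I = integral {a..b} f"
  define J where "J = integral {a..b} (\<lambda>x. L (f x))"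
  have IB: "I \<in> B" unfolding I_def by (rule integral_in_sub[OF B f fB])
  have L0: "L 0 = 0" using add ss_zero[OF B(1)] by (metis add_cancel_right_right add_0)
  have hi: "(f has_integral I) {a..b}" using f by (simp add: integrable_integral I_def)
  have hj: "((\<lambda>x. L (f x)) has_integral J) {a..b}" using Lf by (simp add: integrable_integral J_def)
  have "norm (L I - J) < e" if e: "e > 0" for e
  proof -
    obtain \<gamma>1 where g1: "gauge \<gamma>1" and gp1: "\<And>\<D>. \<D> tagged_division_of {a..b} \<and> \<gamma>1 fine \<D> \<Longrightarrow>
        norm (sum (\<lambda>(x,k). Henstock_Kurzweil_Integration.content k *\<^sub>R f x) \<D> - I) < e/2"
      using hi e unfolding has_integral_real by (meson half_gt_zero)
    obtain \<gamma>2 where g2: "gauge \<gamma>2" and gp2: "\<And>\<D>. \<D> tagged_division_of {a..b} \<and> \<gamma>2 fine \<D> \<Longrightarrow>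
        norm (sum (\<lambda>(x,k). Henstock_Kurzweil_Integration.content k *\<^sub>R L (f x)) \<D> - J) < e/2"
      using hj e unfolding has_integral_real by (meson half_gt_zero)
    obtain p where p: "p tagged_division_of (cbox a b)" "(\<lambda>x. \<gamma>1 x \<inter> \<gamma>2 x) fine p"
      using fine_division_exists[OF gauge_Int[OF g1 g2]] by blast
    have p': "p tagged_division_of {a..b}" using p(1) by (simp add: box_real)
    have f1: "\<gamma>1 fine p" "\<gamma>2 fine p" using p(2) by (auto simp: fine_Int)
    define S where "S = sum (\<lambda>(x,k). Henstock_Kurzweil_Integration.content k *\<^sub>R f x) p"
    have memb: "(case i of (x, k) \<Rightarrow> Henstock_Kurzweil_Integration.content k *\<^sub>R f x) \<in> B" if i: "i \<in> p" for i
    proof -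
      obtain x K where xK: "i = (x,K)" by (cases i)
      have "x \<in> {a..b}" using p' i xK by blast
      then show ?thesis using xK fB B by (auto intro: ss_scaleR)
    qed
    have SB: "S \<in> B" unfolding S_def by (rule ss_sum[OF B(1) memb])
    have LS: "L S = sum (\<lambda>(x,k). Henstock_Kurzweil_Integration.content k *\<^sub>R L (f x)) p"
    proof -
      have "L S = sum (\<lambda>i. L (case i of (x, k) \<Rightarrow> Henstock_Kurzweil_Integration.content k *\<^sub>R f x)) p"
        unfolding S_def by (rule hom_sum[OF add B(1) L0 memb])
      also have "\<dots> = sum (\<lambda>(x,k). Henstock_Kurzweil_Integration.content k *\<^sub>R L (f x)) p"
      proof (rule sum.cong[OF refl])
        fix i assume i: "i \<in> p"
        obtain x K where xK: "i = (x,K)" by (cases i)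
        have "x \<in> {a..b}" using p' i xK by blast
        then show "L (case i of (x, k) \<Rightarrow> Henstock_Kurzweil_Integration.content k *\<^sub>R f x) = (case i of (x, k) \<Rightarrow> Henstock_Kurzweil_Integration.content k *\<^sub>R L (f x))"
          using xK fB sc by auto
      qed
      finally show ?thesis .
    qed
    have "L I = L S + L (I - S)" using add IB SB ss_diff[OF B(1) IB SB] by (metis add.commute diff_add_cancel)
    then have "L I - J = (L S - J) + L (I - S)" by (simp add: algebra_simps)
    then have "norm (L I - J) \<le> norm (L S - J) + norm (L (I - S))" by (metis norm_triangle_ineq)
    also have "norm (L (I - S)) \<le> norm (I - S)" using lip ss_diff[OF B(1) IB SB] by blast
    also have "norm (I - S) < e/2" using gp1[of p] p' f1 by (simp add: S_def norm_minus_commute)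
    also have "norm (L S - J) < e/2" using gp2[of p] p' f1 LS by simp
    finally show ?thesis by simp
  qed
  then have "norm (L I - J) = 0" by (metis norm_ge_zero le_less not_less)
  then show ?thesis by (simp add: I_def J_def)
qed

lemma integral_periodic_shift:
  fixes F :: "real \<Rightarrow> 'b::banach"
  assumes cont: "continuous_on UNIV F" and per: "\<And>x. F (x + 1) = F x" and al: "0 \<le> \<alpha>" "\<alpha> \<le> 1"
  shows "integral {0..1} (\<lambda>\<theta>. F (\<theta> + \<alpha>)) = integral {0..1} F"
proof -
  have int: "F integrable_on {u..v}" for u v
    by (rule integrable_continuous_real) (rule continuous_on_subset[OF cont], simp)
  have "integral {0..1} (\<lambda>\<theta>. F (\<theta> + \<alpha>)) = integral {0..1} (F \<circ> (+) \<alpha>)"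
    by (simp add: o_def add.commute)
  also have "\<dots> = integral {\<alpha>..1+\<alpha>} F" using integral_shift_Icc_real[of 0 1 F \<alpha>] by (simp add: add.commute)
  also have "\<dots> = integral {\<alpha>..1} F + integral {1..1+\<alpha>} F"
    using Henstock_Kurzweil_Integration.integral_combine[of \<alpha> 1 "1+\<alpha>" F] al int by simp
  also have "integral {1..1+\<alpha>} F = integral {0..\<alpha>} (F \<circ> (+) 1)"
    using integral_shift_Icc_real[of 0 \<alpha> F 1] by (simp add: add.commute)
  also have "F \<circ> (+) 1 = F" using per by (auto simp: o_def add.commute)
  also have "integral {\<alpha>..1} F + integral {0..\<alpha>} F = integral {0..1} F"
    using Henstock_Kurzweil_Integration.integral_combine[of 0 \<alpha> 1 F] al int by (simp add: add.commute)
  finally show ?thesis .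
qed

inductive_set gen_alg :: "'a::cstar_algebra set \<Rightarrow> 'a set" for S where
  gbase: "x \<in> S \<Longrightarrow> x \<in> gen_alg S"
| gzero: "0 \<in> gen_alg S"
| gadd: "x \<in> gen_alg S \<Longrightarrow> y \<in> gen_alg S \<Longrightarrow> x + y \<in> gen_alg S"
| gmult: "x \<in> gen_alg S \<Longrightarrow> y \<in> gen_alg S \<Longrightarrow> x * y \<in> gen_alg S"
| gsc: "x \<in> gen_alg S \<Longrightarrow> cscale c x \<in> gen_alg S"
| gst: "x \<in> gen_alg S \<Longrightarrow> cstar x \<in> gen_alg S"

lemma gen_sub:
  assumes "star_subalgebra B" "S \<subseteq> B"
  shows "v \<in> gen_alg S \<Longrightarrow> v \<in> B"
  by (induction v rule: gen_alg.induct) (use assms in \<open>auto intro: ss_zero ss_add ss_mult ss_cscale ss_cstar\<close>)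

lemma gen_ss: "star_subalgebra (gen_alg S)"
  unfolding star_subalgebra_def by (auto intro: gen_alg.intros)

lemma gen_comm1:
  fixes S :: "'a::cstar_algebra set"
  assumes c: "\<forall>u\<in>S. \<forall>w\<in>S. u * w = w * u" and st: "\<forall>s\<in>S. cstar s \<in> S"
  shows "v \<in> gen_alg S \<Longrightarrow> \<forall>s\<in>S. s * v = v * s"
proof (induction v rule: gen_alg.induct)
  case (gbase x) then show ?case using c by auto
next
  case gzero then show ?case by simp
next
  case (gadd x y) then show ?case by (simp add: distrib_left distrib_right)
next
  case (gmult x y)
  show ?case
  proof
    fix s assume s: "s \<in> S"
    have "s * (x * y) = (s * x) * y" by (simp add: mult.assoc)
    also have "\<dots> = x * (s * y)" using gmult s by (simp add: mult.assoc)
    also have "\<dots> = (x * y) * s" using gmult s by (simp add: mult.assoc)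
    finally show "s * (x * y) = (x * y) * s" .
  qed
next
  case (gsc x c) then show ?case by (simp add: cscale_mult_left cscale_mult_right)
next
  case (gst x)
  show ?case
  proof
    fix s assume s: "s \<in> S"
    have "s * cstar x = cstar (x * cstar s)" by (simp add: cstar_mult cstar_cstar)
    also have "\<dots> = cstar (cstar s * x)" using gst st s by metis
    also have "\<dots> = cstar x * s" by (simp add: cstar_mult cstar_cstar)
    finally show "s * cstar x = cstar x * s" .
  qed
qed

lemma gen_comm:
  fixes S :: "'a::cstar_algebra set"
  assumes c: "\<forall>u\<in>S. \<forall>w\<in>S. u * w = w * u" and st: "\<forall>s\<in>S. cstar s \<in> S"
  shows "v \<in> gen_alg S \<Longrightarrow> \<forall>w\<in>gen_alg S. v * w = w * v"
proof (induction v rule: gen_alg.induct)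
  case (gbase x)
  show ?case
  proof
    fix w assume "w \<in> gen_alg S"
    then have "\<forall>s\<in>S. s * w = w * s" by (rule gen_comm1[OF c st])
    then show "x * w = w * x" using gbase by blast
  qed
next
  case gzero then show ?case by simp
next
  case (gadd x y)
  show ?case
  proof
    fix w assume w: "w \<in> gen_alg S"
    have "(x + y) * w = x * w + y * w" by (simp add: distrib_right)
    also have "\<dots> = w * x + w * y" using gadd.IH w by metis
    also have "\<dots> = w * (x + y)" by (simp add: distrib_left)
    finally show "(x + y) * w = w * (x + y)" .
  qed
next
  case (gmult x y)
  show ?case
  proof
    fix s assume s: "s \<in> gen_alg S"
    have "s * (x * y) = (s * x) * y" by (simp add: mult.assoc)
    also have "\<dots> = (x * s) * y" using gmult.IH s by metis
    also have "\<dots> = x * (s * y)" by (simp add: mult.assoc)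
    also have "\<dots> = x * (y * s)" using gmult.IH s by metis
    also have "\<dots> = (x * y) * s" by (simp add: mult.assoc)
    finally show "(x * y) * s = s * (x * y)" by simp
  qed
next
  case (gsc x c)
  show ?case
  proof
    fix w assume w: "w \<in> gen_alg S"
    have "cscale c x * w = cscale c (x * w)" by (rule cscale_mult_left)
    also have "\<dots> = cscale c (w * x)" using gsc.IH w by metis
    also have "\<dots> = w * cscale c x" by (simp add: cscale_mult_right)
    finally show "cscale c x * w = w * cscale c x" .
  qed
next
  case (gst x)
  show ?case
  proof
    fix s assume s: "s \<in> gen_alg S"
    have "s * cstar x = cstar (x * cstar s)" by (simp add: cstar_mult cstar_cstar)
    also have "\<dots> = cstar (cstar s * x)" using gst.IH gen_alg.gst[OF s] by metis
    also have "\<dots> = cstar x * s" by (simp add: cstar_mult cstar_cstar)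
    finally show "cstar x * s = s * cstar x" by simp
  qed
qed

lemma hom_zero:
  fixes \<phi> :: "'a::cstar_algebra \<Rightarrow> 'a"
  assumes "star_subalgebra B" "\<forall>x\<in>B. \<forall>y\<in>B. \<phi> (x + y) = \<phi> x + \<phi> y"
  shows "\<phi> 0 = 0"
proof -
  have "\<phi> (0 + 0) = \<phi> 0 + \<phi> 0" using assms(2) ss_zero[OF assms(1)] by blast
  then show ?thesis by simp
qed

lemma gen_inv:
  fixes S :: "'a::cstar_algebra set"
  assumes B: "star_subalgebra B" "S \<subseteq> B" and aut: "star_automorphism B \<phi>"
    and inv: "\<forall>s\<in>S. \<phi> s \<in> gen_alg S"
  shows "v \<in> gen_alg S \<Longrightarrow> \<phi> v \<in> gen_alg S"
proof (induction v rule: gen_alg.induct)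
  case (gbase x) then show ?case using inv by blast
next
  case gzero
  have "\<phi> 0 = 0" using hom_zero[OF B(1)] aut unfolding star_automorphism_def by blast
  then show ?case by (simp add: gen_alg.gzero)
next
  case (gadd x y)
  have "x \<in> B" "y \<in> B" using gen_sub[OF B] gadd.hyps by blast+
  then have "\<phi> (x + y) = \<phi> x + \<phi> y" using aut unfolding star_automorphism_def by blast
  then show ?case using gadd.IH gen_alg.gadd by metis
next
  case (gmult x y)
  have "x \<in> B" "y \<in> B" using gen_sub[OF B] gmult.hyps by blast+
  then have "\<phi> (x * y) = \<phi> x * \<phi> y" using aut unfolding star_automorphism_def by blast
  then show ?case using gmult.IH gen_alg.gmult by metis
next
  case (gsc x c)
  have "x \<in> B" using gen_sub[OF B] gsc.hyps by blast
  then have "\<phi> (cscale c x) = cscale c (\<phi> x)" using aut unfolding star_automorphism_def by blast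
  then show ?case using gsc.IH gen_alg.gsc by metis
next
  case (gst x)
  have "x \<in> B" using gen_sub[OF B] gst.hyps by blast
  then have "\<phi> (cstar x) = cstar (\<phi> x)" using aut unfolding star_automorphism_def by blast
  then show ?case using gst.IH gen_alg.gst by metis
qed

lemma max_extend:
  fixes B A E :: "'a::cstar_algebra set"
  assumes dyn: "cstar_dynamical_system B \<omega>"
    and mx: "maximal_abelian_invariant_subalgebra B \<omega> A"
    and EB: "E \<subseteq> B"
    and cA: "\<forall>e\<in>E. \<forall>a\<in>A. a * e = e * a"
    and cE: "\<forall>e\<in>E. \<forall>e'\<in>E. e * e' = e'*e"
    and sE: "\<forall>e\<in>E. cstar e \<in> E"
    and iE: "\<forall>t\<in>circle. \<forall>e\<in>E. \<omega> t e \<in> gen_alg (A \<union> E)"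
  shows "E \<subseteq> A"
proof -
  have B: "star_subalgebra B" using dyn unfolding cstar_dynamical_system_def cstar_subalgebra_def by blast
  have aut: "\<forall>t\<in>circle. star_automorphism B (\<omega> t)" using dyn unfolding cstar_dynamical_system_def by blast
  have A: "A \<subseteq> B" "star_subalgebra A" "\<forall>x\<in>A. \<forall>y\<in>A. x * y = y * x" "\<forall>t\<in>circle. \<omega> t ` A \<subseteq> A"
    and mxC: "\<And>C. abelian_invariant_subalgebra B \<omega> C \<Longrightarrow> A \<subseteq> C \<Longrightarrow> C = A"
    using mx unfolding maximal_abelian_invariant_subalgebra_def abelian_invariant_subalgebra_def by auto
  define S where "S = A \<union> E"
  have SB: "S \<subseteq> B" using A EB by (auto simp: S_def)
  have cS: "\<forall>u\<in>S. \<forall>w\<in>S. u * w = w * u" using A(3) cA cE by (auto simp: S_def)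
  have sS: "\<forall>s\<in>S. cstar s \<in> S" using sE ss_cstar[OF A(2)] unfolding S_def by blast
  have iS: "\<forall>s\<in>S. \<omega> t s \<in> gen_alg S" if t: "t \<in> circle" for t
    using iE t A(4) unfolding S_def by (blast intro: gen_alg.gbase)
  have "abelian_invariant_subalgebra B \<omega> (gen_alg S)"
    unfolding abelian_invariant_subalgebra_def
  proof (intro conjI ballI)
    show "gen_alg S \<subseteq> B" using gen_sub[OF B SB] by blast
    show "star_subalgebra (gen_alg S)" by (rule gen_ss)
    show "x * y = y * x" if "x \<in> gen_alg S" "y \<in> gen_alg S" for x y
      using gen_comm[OF cS sS] that by blast
    show "\<omega> t ` gen_alg S \<subseteq> gen_alg S" if "t \<in> circle" for t
      using gen_inv[OF B SB _ iS[OF that]] aut that by blast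
  qed
  moreover have "A \<subseteq> gen_alg S" unfolding S_def by (blast intro: gen_alg.gbase)
  ultimately have "gen_alg S = A" by (rule mxC)
  then show ?thesis unfolding S_def by (blast intro: gen_alg.gbase)
qed


lemma eigen_in_A:
  fixes B A :: "'a::cstar_algebra set" and x :: 'a
  assumes dyn: "cstar_dynamical_system B \<omega>"
    and mx: "maximal_abelian_invariant_subalgebra B \<omega> A"
    and xB: "x \<in> B"
    and xc: "\<forall>a\<in>A. a * x = x * a"
    and xw: "\<forall>t\<in>circle. \<omega> t x = cscale (c t) x"
    and c1: "\<forall>t\<in>circle. cmod (c t) = 1"
  shows "x \<in> A"
proof -
  have B: "star_subalgebra B" using dyn unfolding cstar_dynamical_system_def cstar_subalgebra_def by blast
  have aut: "\<forall>t\<in>circle. star_automorphism B (\<omega> t)" using dyn unfolding cstar_dynamical_system_def by blast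
  have A: "star_subalgebra A"
    using mx unfolding maximal_abelian_invariant_subalgebra_def abelian_invariant_subalgebra_def by blast
  have xsB: "cstar x \<in> B" using B xB by (rule ss_cstar)
  have xsc: "\<forall>a\<in>A. a * cstar x = cstar x * a"
  proof
    fix a assume a: "a \<in> A"
    have "cstar a \<in> A" using A a by (rule ss_cstar)
    then have "x * cstar a = cstar a * x" using xc by metis
    then have "cstar (x * cstar a) = cstar (cstar a * x)" by simp
    then show "a * cstar x = cstar x * a" by (simp add: cstar_mult cstar_cstar)
  qed
  have ws: "\<omega> t (cstar x) = cscale (cnj (c t)) (cstar x)" if t: "t \<in> circle" for t
  proof -
    have "\<omega> t (cstar x) = cstar (\<omega> t x)" using aut t xB unfolding star_automorphism_def by blast
    then show ?thesis using xw t by (simp add: cstar_cscale)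
  qed
  have cc: "cnj (c t) * c t = 1" if t: "t \<in> circle" for t
  proof -
    have "c t * cnj (c t) = complex_of_real ((cmod (c t))^2)" by (rule complex_norm_square[symmetric])
    then show ?thesis using c1 t by (simp add: mult.commute)
  qed
  have cc': "c t * cnj (c t) = 1" if t: "t \<in> circle" for t using cc[OF t] by (simp add: mult.commute)
  define P where "P = cstar x * x"
  define Q where "Q = x * cstar x"
  have PB: "P \<in> B" and QB: "Q \<in> B" using B xB xsB by (auto simp: P_def Q_def intro: ss_mult)
  have Pc: "\<forall>a\<in>A. a * P = P * a"
  proof
    fix a assume a: "a \<in> A"
    have "a * P = (a * cstar x) * x" by (simp add: P_def mult.assoc)
    also have "\<dots> = cstar x * (a * x)" using xsc a by (simp add: mult.assoc)
    also have "\<dots> = P * a" using xc a by (simp add: P_def mult.assoc)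
    finally show "a * P = P * a" .
  qed
  have Qc: "\<forall>a\<in>A. a * Q = Q * a"
  proof
    fix a assume a: "a \<in> A"
    have "a * Q = (a * x) * cstar x" by (simp add: Q_def mult.assoc)
    also have "\<dots> = x * (a * cstar x)" using xc a by (simp add: mult.assoc)
    also have "\<dots> = Q * a" using xsc a by (simp add: Q_def mult.assoc)
    finally show "a * Q = Q * a" .
  qed
  have Pw: "\<omega> t P = P" if t: "t \<in> circle" for t
  proof -
    have "\<omega> t P = \<omega> t (cstar x) * \<omega> t x" using aut t xB xsB unfolding star_automorphism_def P_def by blast
    also have "\<dots> = cscale (cnj (c t) * c t) P"
      using ws[OF t] xw t by (simp add: P_def cscale_mult_left cscale_mult_right cscale_cscale mult.commute)
    finally show ?thesis using cc[OF t] by simp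
  qed
  have Qw: "\<omega> t Q = Q" if t: "t \<in> circle" for t
  proof -
    have "\<omega> t Q = \<omega> t x * \<omega> t (cstar x)" using aut t xB xsB unfolding star_automorphism_def Q_def by blast
    also have "\<dots> = cscale (c t * cnj (c t)) Q"
      using ws[OF t] xw t by (simp add: Q_def cscale_mult_left cscale_mult_right cscale_cscale mult.commute)
    finally show ?thesis using cc'[OF t] by simp
  qed
  have Ps: "cstar P = P" and Qs: "cstar Q = Q" by (simp_all add: P_def Q_def cstar_mult cstar_cstar)
  have PA: "P \<in> A"
  proof -
    have "{P} \<subseteq> A"
    proof (rule max_extend[OF dyn mx])
      show "{P} \<subseteq> B" using PB by simp
      show "\<forall>e\<in>{P}. \<forall>a\<in>A. a * e = e * a" using Pc by simp
      show "\<forall>e\<in>{P}. \<forall>e'\<in>{P}. e * e' = e' * e" by simp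
      show "\<forall>e\<in>{P}. cstar e \<in> {P}" using Ps by simp
      show "\<forall>t\<in>circle. \<forall>e\<in>{P}. \<omega> t e \<in> gen_alg (A \<union> {P})" using Pw by (simp add: gen_alg.gbase)
    qed
    then show ?thesis by simp
  qed
  have QA: "Q \<in> A"
  proof -
    have "{Q} \<subseteq> A"
    proof (rule max_extend[OF dyn mx])
      show "{Q} \<subseteq> B" using QB by simp
      show "\<forall>e\<in>{Q}. \<forall>a\<in>A. a * e = e * a" using Qc by simp
      show "\<forall>e\<in>{Q}. \<forall>e'\<in>{Q}. e * e' = e' * e" by simp
      show "\<forall>e\<in>{Q}. cstar e \<in> {Q}" using Qs by simp
      show "\<forall>t\<in>circle. \<forall>e\<in>{Q}. \<omega> t e \<in> gen_alg (A \<union> {Q})" using Qw by (simp add: gen_alg.gbase)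
    qed
    then show ?thesis by simp
  qed
  have xP: "x * P = P * x" using xc PA by metis
  have xQ: "x * Q = Q * x" using xc QA by metis
  define y where "y = Q - P"
  have ys: "cstar y = y" by (simp add: y_def cstar_diff Ps Qs)
  have Px: "P * x = Q * x"
  proof -
    have "P * x = x * P" using xP by simp
    also have "\<dots> = Q * x" by (simp add: P_def Q_def mult.assoc)
    finally show ?thesis .
  qed
  have yx: "y * x = 0" by (simp add: y_def left_diff_distrib Px)
  have xy: "x * y = 0" by (simp add: y_def right_diff_distrib xQ xP Px)
  have yxs: "y * cstar x = 0"
  proof -
    have "cstar (x * y) = 0" using xy by simp
    then show ?thesis by (simp add: cstar_mult ys)
  qed
  have "y * y = (y * x) * cstar x - (y * cstar x) * x"
    by (simp add: y_def[of] P_def Q_def right_diff_distrib mult.assoc)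
  also have "\<dots> = 0" by (simp add: yx yxs)
  finally have yy: "y * y = 0" .
  have "norm y ^ 2 = norm (cstar y * y)" by (simp add: cstar_identity)
  also have "\<dots> = 0" by (simp add: ys yy)
  finally have "y = 0" by simp
  then have normal: "x * cstar x = cstar x * x" by (simp add: y_def P_def Q_def)
  have "{x, cstar x} \<subseteq> A"
  proof (rule max_extend[OF dyn mx])
    show "{x, cstar x} \<subseteq> B" using xB xsB by simp
    show "\<forall>e\<in>{x, cstar x}. \<forall>a\<in>A. a * e = e * a" using xc xsc by simp
    show "\<forall>e\<in>{x, cstar x}. \<forall>e'\<in>{x, cstar x}. e * e' = e' * e" using normal by auto
    show "\<forall>e\<in>{x, cstar x}. cstar e \<in> {x, cstar x}" by (simp add: cstar_cstar)
    show "\<forall>t\<in>circle. \<forall>e\<in>{x, cstar x}. \<omega> t e \<in> gen_alg (A \<union> {x, cstar x})"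
    proof (intro ballI)
      fix t e assume t: "t \<in> circle" and e: "e \<in> {x, cstar x}"
      have g: "cscale (c t) x \<in> gen_alg (A \<union> {x, cstar x})" by (intro gen_alg.gsc gen_alg.gbase) simp
      have "\<omega> t (cstar x) = cstar (\<omega> t x)" using aut t xB unfolding star_automorphism_def by blast
      then show "\<omega> t e \<in> gen_alg (A \<union> {x, cstar x})"
        using e g xw t by (auto intro: gen_alg.gst)
    qed
  qed
  then show ?thesis by simp
qed


lemma circle_powi: "t \<in> circle \<Longrightarrow> cmod (t powi n) = 1"
  by (simp add: circle_def norm_power_int)

lemma cis_in_circle: "cis x \<in> circle"
  by (simp add: circle_def)

lemma circle_cis01: assumes "s \<in> circle" shows "\<exists>\<alpha>. 0 \<le> \<alpha> \<and> \<alpha> \<le> 1 \<and> s = cis (2*pi*\<alpha>)"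
proof -
  have s1: "cmod s = 1" using assms by (simp add: circle_def)
  then have "s \<noteq> 0" by auto
  then have cs: "cis (Arg s) = s" using s1 by (simp add: cis_Arg sgn_div_norm)
  show ?thesis
  proof (cases "Arg s \<ge> 0")
    case True
    then show ?thesis using Arg_bounded[of s] cs
      by (intro exI[of _ "Arg s / (2*pi)"]) (auto simp: field_simps)
  next
    case False
    have "2*pi*(Arg s / (2*pi) + 1) = Arg s + 2*pi" by (simp add: distrib_left)
    then have "cis (2*pi*(Arg s / (2*pi) + 1)) = cis (Arg s + 2*pi)" by simp
    also have "\<dots> = s" using cs by (simp add: cis_mult[symmetric])
    finally show ?thesis using Arg_bounded[of s] False
      by (intro exI[of _ "Arg s / (2*pi) + 1"]) (auto simp: field_simps)
  qed
qed

theorem proposition2p4: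
  fixes B A :: "'a::cstar_algebra set"
    and \<omega> :: "complex \<Rightarrow> 'a \<Rightarrow> 'a"
  assumes "cstar_dynamical_system B \<omega>"
    and "maximal_abelian_invariant_subalgebra B \<omega> A"
  shows "\<forall>n::int. spectral_proj \<omega> n ` commutant_in B A \<subseteq> A"
proof (intro allI subsetI)
  fix n :: int and y assume "y \<in> spectral_proj \<omega> n ` commutant_in B A"
  then obtain b where b: "b \<in> B" "\<forall>a\<in>A. a * b = b * a" and y: "y = spectral_proj \<omega> n b"
    unfolding commutant_in_def by blast
  note dyn = assms(1) and mx = assms(2)
  have Bs: "star_subalgebra B" and Bc: "closed B"
    using dyn unfolding cstar_dynamical_system_def cstar_subalgebra_def by blast+
  have aut: "\<And>t. t \<in> circle \<Longrightarrow> star_automorphism B (\<omega> t)"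
    using dyn unfolding cstar_dynamical_system_def by blast
  have w1: "\<And>v. v \<in> B \<Longrightarrow> \<omega> 1 v = v" using dyn unfolding cstar_dynamical_system_def by blast
  have grp: "\<And>s t v. s \<in> circle \<Longrightarrow> t \<in> circle \<Longrightarrow> v \<in> B \<Longrightarrow> \<omega> (s * t) v = \<omega> s (\<omega> t v)"
    using dyn unfolding cstar_dynamical_system_def by blast
  have contw: "continuous_on circle (\<lambda>t. \<omega> t b)" using dyn b unfolding cstar_dynamical_system_def by blast
  have AB: "A \<subseteq> B" and Ainv: "\<And>t. t \<in> circle \<Longrightarrow> \<omega> t ` A \<subseteq> A"
    using mx unfolding maximal_abelian_invariant_subalgebra_def abelian_invariant_subalgebra_def by blast+
  have wB: "\<And>t v. t \<in> circle \<Longrightarrow> v \<in> B \<Longrightarrow> \<omega> t v \<in> B"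
    using aut unfolding star_automorphism_def bij_betw_def by blast
  have hom: "\<And>t. t \<in> circle \<Longrightarrow> \<forall>x\<in>B. \<forall>y\<in>B. \<omega> t (x + y) = \<omega> t x + \<omega> t y \<and> \<omega> t (x * y) = \<omega> t x * \<omega> t y"
    and hsc: "\<And>t. t \<in> circle \<Longrightarrow> \<forall>c. \<forall>x\<in>B. \<omega> t (cscale c x) = cscale c (\<omega> t x)"
    and hst: "\<And>t. t \<in> circle \<Longrightarrow> \<forall>x\<in>B. \<omega> t (cstar x) = cstar (\<omega> t x)"
    using aut unfolding star_automorphism_def by blast+
  define e where "e = (\<lambda>\<theta>::real. cis (2 * pi * \<theta>))"
  define f where "f = (\<lambda>\<theta>. cscale (e \<theta> powi (- n)) (\<omega> (e \<theta>) b))"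
  have yf: "y = integral {0..1} f" unfolding y spectral_proj_def f_def e_def ..
  have ec: "e \<theta> \<in> circle" for \<theta> by (simp add: e_def cis_in_circle)
  have fB: "f \<theta> \<in> B" for \<theta> unfolding f_def using Bs wB[OF ec b(1)] by (rule ss_cscale)
  have ce: "continuous_on UNIV e" unfolding e_def by (intro continuous_intros)
  have cw: "continuous_on UNIV (\<lambda>\<theta>. \<omega> (e \<theta>) b)"
    by (rule continuous_on_compose2[OF contw ce]) (auto simp: ec)
  have cp: "continuous_on UNIV (\<lambda>\<theta>. e \<theta> powi (- n))"
    by (intro continuous_intros ce) (auto simp: e_def)
  have fc: "continuous_on UNIV f"
    unfolding f_def by (rule bounded_bilinear.continuous_on[OF bounded_bilinear_cscale cp cw])
  have fint: "\<And>u v. f integrable_on {u..v}"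
    by (rule integrable_continuous_real) (rule continuous_on_subset[OF fc], simp)
  have eper: "e (\<theta> + 1) = e \<theta>" for \<theta>
    by (simp add: e_def distrib_left cis_mult[symmetric])
  have fper: "f (\<theta> + 1) = f \<theta>" for \<theta> by (simp add: f_def eper)
  have yB: "y \<in> B" unfolding yf by (rule integral_in_sub[OF Bs Bc fint]) (simp add: fB)
  have yc: "\<forall>a\<in>A. a * y = y * a"
  proof
    fix a assume a: "a \<in> A"
    have pw: "a * \<omega> t b = \<omega> t b * a" if t: "t \<in> circle" for t
    proof -
      have ct: "cnj t \<in> circle" using t by (simp add: circle_def)
      define a' where "a' = \<omega> (cnj t) a"
      have a'A: "a' \<in> A" using Ainv[OF ct] a by (auto simp: a'_def)
      have tt: "t * cnj t = 1" using t by (simp add: circle_def complex_norm_square[symmetric])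
      have "\<omega> t a' = \<omega> (t * cnj t) a" using grp[OF t ct] a AB by (auto simp: a'_def)
      then have ta: "\<omega> t a' = a" using tt w1 a AB by auto
      have "a' * b = b * a'" using b(2) a'A by metis
      then have "\<omega> t (a' * b) = \<omega> t (b * a')" by simp
      then show ?thesis using hom[OF t] a'A AB b(1) ta by auto
    qed
    have "a * f \<theta> = f \<theta> * a" for \<theta>
      using pw[OF ec[of \<theta>]] by (simp add: f_def cscale_mult_left cscale_mult_right)
    then have eq: "((*) a \<circ> f) = ((\<lambda>z. z * a) \<circ> f)" by (auto simp: o_def)
    have "a * y = integral {0..1} ((*) a \<circ> f)"
      unfolding yf by (rule integral_linear[OF fint bounded_linear_mult_right, symmetric])
    also have "\<dots> = integral {0..1} ((\<lambda>z. z * a) \<circ> f)" by (simp only: eq)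
    also have "\<dots> = y * a"
      unfolding yf by (rule integral_linear[OF fint bounded_linear_mult_left])
    finally show "a * y = y * a" .
  qed
  have yw: "\<forall>s\<in>circle. \<omega> s y = cscale (s powi n) y"
  proof
    fix s assume s: "s \<in> circle"
    obtain \<alpha> where al: "0 \<le> \<alpha>" "\<alpha> \<le> 1" and sa: "s = e \<alpha>"
      using circle_cis01[OF s] by (auto simp: e_def)
    have s0: "s \<noteq> 0" using s by (auto simp: circle_def)
    have pt: "\<omega> s (f \<theta>) = cscale (s powi n) (f (\<theta> + \<alpha>))" for \<theta>
    proof -
      have e1: "s * e \<theta> = e (\<theta> + \<alpha>)" by (simp add: sa e_def cis_mult distrib_left add.commute)
      have e2: "e \<theta> powi (- n) = s powi n * e (\<theta> + \<alpha>) powi (- n)"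
      proof -
        have "s powi n * e (\<theta> + \<alpha>) powi (- n) = s powi n * (s powi (- n) * e \<theta> powi (- n))"
          by (simp only: e1[symmetric] power_int_mult_distrib)
        also have "\<dots> = (s powi n * s powi (- n)) * e \<theta> powi (- n)" by (simp only: mult.assoc)
        also have "s powi n * s powi (- n) = 1" using s0 by (simp add: power_int_minus)
        finally show ?thesis by simp
      qed
      have "\<omega> s (f \<theta>) = cscale (e \<theta> powi (- n)) (\<omega> s (\<omega> (e \<theta>) b))"
        using hsc[OF s] wB[OF ec b(1)] by (simp add: f_def)
      also have "\<omega> s (\<omega> (e \<theta>) b) = \<omega> (e (\<theta> + \<alpha>)) b" using grp[OF s ec[of \<theta>] b(1)] e1 by simp
      finally show ?thesis by (simp add: e2 f_def cscale_cscale)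
    qed
    have cshift: "continuous_on UNIV (\<lambda>\<theta>. f (\<theta> + \<alpha>))"
      by (rule continuous_on_compose2[OF fc]) (auto intro: continuous_intros)
    have sint: "(\<lambda>\<theta>. f (\<theta> + \<alpha>)) integrable_on {0..1}"
      by (rule integrable_continuous_real) (rule continuous_on_subset[OF cshift], simp)
    have lint: "(\<lambda>\<theta>. \<omega> s (f \<theta>)) integrable_on {0..1}"
      unfolding pt using integrable_linear[OF sint bounded_linear_cscale] by (simp add: o_def)
    have "\<omega> s y = integral {0..1} (\<lambda>\<theta>. \<omega> s (f \<theta>))"
      unfolding yf
    proof (rule integral_hom[OF Bs Bc fint lint])
      show "\<forall>x\<in>{0..1}. f x \<in> B" by (simp add: fB)
      show "\<forall>x\<in>B. \<forall>y\<in>B. \<omega> s (x + y) = \<omega> s x + \<omega> s y" using hom[OF s] by blast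
      show "\<forall>r. \<forall>x\<in>B. \<omega> s (r *\<^sub>R x) = r *\<^sub>R \<omega> s x"
        using hsc[OF s] by (simp add: cscale_of_real[symmetric])
      show "\<forall>x\<in>B. norm (\<omega> s x) \<le> norm x"
        using star_hom_contractive[OF Bs Bc hom[OF s] hsc[OF s] hst[OF s]] by blast
    qed
    also have "\<dots> = integral {0..1} (cscale (s powi n) \<circ> (\<lambda>\<theta>. f (\<theta> + \<alpha>)))"
      by (simp add: pt o_def)
    also have "\<dots> = cscale (s powi n) (integral {0..1} (\<lambda>\<theta>. f (\<theta> + \<alpha>)))"
      by (rule integral_linear[OF sint bounded_linear_cscale])
    also have "integral {0..1} (\<lambda>\<theta>. f (\<theta> + \<alpha>)) = y"
      unfolding yf by (rule integral_periodic_shift[OF fc fper al])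
    finally show "\<omega> s y = cscale (s powi n) y" .
  qed
  show "y \<in> A"
    by (rule eigen_in_A[OF dyn mx yB yc yw]) (simp add: circle_powi)
qed

end
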